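(* Let $n \ge 1$. Let $H_n$ be the hypergraph whose vertex set consists of the $8n$ variable indices $(k,i)$ with $k \in \{1,\dots,n\}$ and $i \in \{1,2,3,4,5,6,A,B\}$, and whose hyperedges (scopes) are: (i) the singletons $\{(k,i)\}$ for all vertices; (ii) for each $k \in \{1,\dots,n\}$, the pairs $\{(k,1),(k,2)\}$, $\{(k,2),(k,3)\}$, $\{(k,3),(k,6)\}$, $\{(k,1),(k,4)\}$, $\{(k,4),(k,5)\}$, $\{(k,5),(k,6)\}$, $\{(k,A),(k,B)\}$, $\{(k,1),(k,B)\}$, $\{(k,2),(k,B)\}$, $\{(k,4),(k,A)\}$, $\{(k,4),(k,B)\}$, and the triples $\{(k,2),(k,A),(k,B)\}$, $\{(k,4),(k,A),(k,B)\}$; (iii) the pairs $\{(k,6),(k-1,1)\}$ for $2 \le k \le n$ and $\{(k,B),(k+1,A)\}$ for $1 \le k \le n-1$; (iv) the pair $\{(1,6),(1,A)\}$. Then the pathwidth of $H_n$ is exactly $3$.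
   Context: A path decomposition of a hypergraph $(V,\mathcal{S})$ is a sequence of subsets (bins) $X_1,\dots,X_p \subseteq V$ such that: every vertex lies in some bin; for every hyperedge $S \in \mathcal{S}$ there is $r$ with $S \subseteq X_r$; and if $v \in X_r \cap X_s$ then $v \in X_\ell$ for all $r \le \ell \le s$. Its width is $\max_r |X_r| - 1$, and the pathwidth of $(V,\mathcal{S})$ is the minimum width over all path decompositions. This hypergraph is the constraint hypergraph of the paper's "controlled doubling construction" with $n$ gadgets. *)

theory Defs
  imports Main
begin

definition is_path_decomposition :: "'a set \<Rightarrow> 'a set set \<Rightarrow> 'a set list \<Rightarrow> bool" where
  "is_path_decomposition V S Xs \<longleftrightarrow>
     Xs \<noteq> [] \<and>
     (\<forall>r < length Xs. Xs ! r \<subseteq> V) \<and>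
     (\<forall>v \<in> V. \<exists>r < length Xs. v \<in> Xs ! r) \<and>
     (\<forall>e \<in> S. \<exists>r < length Xs. e \<subseteq> Xs ! r) \<and>
     (\<forall>v r s l. r \<le> l \<and> l \<le> s \<and> s < length Xs \<and> v \<in> Xs ! r \<and> v \<in> Xs ! s
        \<longrightarrow> v \<in> Xs ! l)"

definition pd_width :: "'a set list \<Rightarrow> nat" where
  "pd_width Xs = Max (card ` set Xs) - 1"

definition pathwidth :: "'a set \<Rightarrow> 'a set set \<Rightarrow> nat" where
  "pathwidth V S = (LEAST w. \<exists>Xs. is_path_decomposition V S Xs \<and> pd_width Xs = w)"

datatype idx = I1 | I2 | I3 | I4 | I5 | I6 | IA | IB

definition Hn_V :: "nat \<Rightarrow> (nat \<times> idx) set" where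
  "Hn_V n = {1..n} \<times> UNIV"

definition gadget_edges :: "nat \<Rightarrow> (nat \<times> idx) set set" where
  "gadget_edges k =
    {{(k,I1),(k,I2)}, {(k,I2),(k,I3)}, {(k,I3),(k,I6)}, {(k,I1),(k,I4)},
     {(k,I4),(k,I5)}, {(k,I5),(k,I6)}, {(k,IA),(k,IB)}, {(k,I1),(k,IB)},
     {(k,I2),(k,IB)}, {(k,I4),(k,IA)}, {(k,I4),(k,IB)},
     {(k,I2),(k,IA),(k,IB)}, {(k,I4),(k,IA),(k,IB)}}"

definition Hn_S :: "nat \<Rightarrow> (nat \<times> idx) set set" where
  "Hn_S n =
     {{v} | v. v \<in> Hn_V n}
     \<union> (\<Union>k\<in>{1..n}. gadget_edges k)
     \<union> {{(k,I6),(k-1,I1)} | k. 2 \<le> k \<and> k \<le> n}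
     \<union> {{(k,IB),(k+1,IA)} | k. 1 \<le> k \<and> k \<le> n - 1}
     \<union> {{(1,I6),(1,IA)}}"

end

theory Submission
  imports Defs
begin

lemma pd_parts:
  assumes "is_path_decomposition V S Xs"
  shows "\<And>r. r < length Xs \<Longrightarrow> Xs ! r \<subseteq> V"
    and "\<And>v r s l. r \<le> l \<Longrightarrow> l \<le> s \<Longrightarrow> s < length Xs \<Longrightarrow> v \<in> Xs ! r \<Longrightarrow> v \<in> Xs ! s \<Longrightarrow> v \<in> Xs ! l"
    and "\<And>e. e \<in> S \<Longrightarrow> \<exists>r. r < length Xs \<and> e \<subseteq> Xs ! r"
  using assms unfolding is_path_decomposition_def by meson+

lemma G: "n \<ge> 1 \<Longrightarrow> gadget_edges 1 \<subseteq> Hn_S n"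
proof -
  assume n: "n \<ge> 1"
  have "gadget_edges 1 \<subseteq> (\<Union>k\<in>{1..n}. gadget_edges k)" using n by (intro UN_upper) simp
  then show ?thesis unfolding Hn_S_def by (rule le_supI1[OF le_supI1[OF le_supI1[OF le_supI2]]])
qed

lemma e6A: "{(1,I6),(1,IA)} \<in> Hn_S n"
  unfolding Hn_S_def by (rule UnI2) simp

lemma ge1: "{(1,I2),(1,IA),(1,IB)} \<in> gadget_edges 1" "{(1,I4),(1,IA),(1,IB)} \<in> gadget_edges 1"
  "{(1,I1),(1,I4)} \<in> gadget_edges 1" "{(1,I1),(1,IB)} \<in> gadget_edges 1" "{(1,I4),(1,IB)} \<in> gadget_edges 1"
  "{(1,I5),(1,I6)} \<in> gadget_edges 1" "{(1,I4),(1,I5)} \<in> gadget_edges 1"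
  unfolding gadget_edges_def by (rule insertI1 insertI2)+

lemma core:
  fixes mem :: "'v \<Rightarrow> nat \<Rightarrow> bool"
  assumes conv: "\<And>v x y z. mem v x \<Longrightarrow> mem v z \<Longrightarrow> x \<le> y \<Longrightarrow> y \<le> z \<Longrightarrow> mem v y"
    and quad: "\<And>a b c d x. distinct [a,b,c,d] \<Longrightarrow> mem a x \<Longrightarrow> mem b x \<Longrightarrow> mem c x \<Longrightarrow> mem d x \<Longrightarrow> False"
    and dist: "distinct [v1,v2,v4,v5,v6,vA,vB]"
    and p: "mem v2 p" "mem vA p" "mem vB p"
    and q: "mem v4 q" "mem vA q" "mem vB q"
    and e14: "mem v1 x14" "mem v4 x14"
    and e1B: "mem v1 x1B" "mem vB x1B"
    and e4B: "mem v4 x4B" "mem vB x4B"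
    and a: "mem v6 a" "mem vA a"
    and s: "mem v5 s" "mem v6 s"
    and u: "mem v5 u" "mem v4 u"
  shows False
proof -
  have conv2: "mem v y" if "mem v x" "mem v z" "min x z \<le> y" "y \<le> max x z" for v x y z
  proof (cases "x \<le> z")
    case True then show ?thesis using conv[OF that(1,2)] that(3,4) by simp
  next
    case False then show ?thesis using conv[OF that(2,1)] that(3,4) by simp
  qed
  define t where "t = max (min x14 x1B) (min (max x14 x1B) x4B)"
  have t1: "mem v1 t" by (rule conv2[OF e14(1) e1B(1)]) (simp_all add: t_def min_def max_def)
  have t2: "mem v4 t" by (rule conv2[OF e14(2) e4B(1)]) (simp_all add: t_def min_def max_def)
  have t3: "mem vB t" by (rule conv2[OF e1B(2) e4B(2)]) (simp_all add: t_def min_def max_def)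
  have d2: "distinct [v2,v4,vA,vB]" and d1: "distinct [v1,v4,vB,vA]"
    and d6: "distinct [v6,v4,vB,vA]" and d5: "distinct [v5,v4,vB,vA]"
    using dist by auto
  have Q2: "\<And>x. mem v2 x \<Longrightarrow> mem v4 x \<Longrightarrow> mem vA x \<Longrightarrow> mem vB x \<Longrightarrow> False" by (rule quad[OF d2])
  have Q1: "\<And>x. mem v1 x \<Longrightarrow> mem v4 x \<Longrightarrow> mem vB x \<Longrightarrow> mem vA x \<Longrightarrow> False" by (rule quad[OF d1])
  have Q6: "\<And>x. mem v6 x \<Longrightarrow> mem v4 x \<Longrightarrow> mem vB x \<Longrightarrow> mem vA x \<Longrightarrow> False" by (rule quad[OF d6])
  have Q5: "\<And>x. mem v5 x \<Longrightarrow> mem v4 x \<Longrightarrow> mem vB x \<Longrightarrow> mem vA x \<Longrightarrow> False" by (rule quad[OF d5])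
  have "p \<noteq> q" using Q2 p q by blast
  then consider "p < q" | "q < p" by linarith
  then show False
  proof cases
    case 1
    have no4: "x > p" if "mem v4 x" for x
    proof (rule ccontr)
      assume "\<not> p < x"
      then have "mem v4 p" using conv[OF that q(1)] 1 by simp
      then show False using Q2 p by blast
    qed
    have "t > q"
    proof (rule ccontr)
      assume "\<not> q < t"
      then have "mem vA t" using conv[OF p(2) q(2)] no4[OF t2] by simp
      then show False using Q1 t1 t2 t3 by blast
    qed
    have "a < q"
    proof (rule ccontr)
      assume h: "\<not> a < q"
      have "a \<le> t"
      proof (rule ccontr)
        assume "\<not> a \<le> t"
        then have "mem vA t" using conv[OF q(2) a(2)] \<open>t > q\<close> by simp
        then show False using Q1 t1 t2 t3 by blast
      qed
      then have "mem v4 a" "mem vB a" using conv[OF q(1) t2] conv[OF q(3) t3] h by simp_all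
      then show False using Q6 a by blast
    qed
    have "s < q"
    proof (rule ccontr)
      assume "\<not> s < q"
      then have "mem v6 q" using conv[OF a(1) s(2)] \<open>a < q\<close> by simp
      then show False using Q6 q by blast
    qed
    have "u < q"
    proof (rule ccontr)
      assume "\<not> u < q"
      then have "mem v5 q" using conv[OF s(1) u(1)] \<open>s < q\<close> by simp
      then show False using Q5 q by blast
    qed
    have "u > p" using no4 u(2) by blast
    then have "mem vA u" "mem vB u" using conv[OF p(2) q(2)] conv[OF p(3) q(3)] \<open>u < q\<close> by simp_all
    then show False using Q5 u by blast
  next
    case 2
    have no4: "x < p" if "mem v4 x" for x
    proof (rule ccontr)
      assume "\<not> x < p"
      then have "mem v4 p" using conv[OF q(1) that] 2 by simp
      then show False using Q2 p by blast
    qed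
    have "t < q"
    proof (rule ccontr)
      assume "\<not> t < q"
      then have "mem vA t" using conv[OF q(2) p(2)] no4[OF t2] by simp
      then show False using Q1 t1 t2 t3 by blast
    qed
    have "a > q"
    proof (rule ccontr)
      assume h: "\<not> a > q"
      have "a \<ge> t"
      proof (rule ccontr)
        assume "\<not> a \<ge> t"
        then have "mem vA t" using conv[OF a(2) q(2)] \<open>t < q\<close> by simp
        then show False using Q1 t1 t2 t3 by blast
      qed
      then have "mem v4 a" "mem vB a" using conv[OF t2 q(1)] conv[OF t3 q(3)] h by simp_all
      then show False using Q6 a by blast
    qed
    have "s > q"
    proof (rule ccontr)
      assume "\<not> s > q"
      then have "mem v6 q" using conv[OF s(2) a(1)] \<open>a > q\<close> by simp
      then show False using Q6 q by blast
    qed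
    have "u > q"
    proof (rule ccontr)
      assume "\<not> u > q"
      then have "mem v5 q" using conv[OF u(1) s(1)] \<open>s > q\<close> by simp
      then show False using Q5 q by blast
    qed
    have "u < p" using no4 u(2) by blast
    then have "mem vA u" "mem vB u" using conv[OF q(2) p(2)] conv[OF q(3) p(3)] \<open>u > q\<close> by simp_all
    then show False using Q5 u by blast
  qed
qed

lemma idx_UNIV: "(UNIV::idx set) = {I1,I2,I3,I4,I5,I6,IA,IB}"
proof (rule set_eqI)
  fix x :: idx show "x \<in> UNIV \<longleftrightarrow> x \<in> {I1,I2,I3,I4,I5,I6,IA,IB}" by (cases x) auto
qed

lemma finite_V: "finite (Hn_V n)"
  unfolding Hn_V_def idx_UNIV by simp

lemma lower:
  assumes n: "n \<ge> 1" and PD: "is_path_decomposition (Hn_V n) (Hn_S n) Xs"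
  shows "3 \<le> pd_width Xs"
proof (rule ccontr)
  assume w: "\<not> 3 \<le> pd_width Xs"
  note sub = pd_parts(1)[OF PD] and conv0 = pd_parts(2)[OF PD] and edge = pd_parts(3)[OF PD]
  have small: "card (Xs ! r) \<le> 3" if r: "r < length Xs" for r
  proof -
    have "Xs ! r \<in> set Xs" using r by simp
    then have "card (Xs ! r) \<in> card ` set Xs" by (rule imageI)
    then have "card (Xs ! r) \<le> Max (card ` set Xs)" by (intro Max_ge) simp_all
    moreover have "Max (card ` set Xs) - 1 < 3" using w by (simp add: pd_width_def)
    ultimately show ?thesis by linarith
  qed
  define mem where "mem v x = (x < length Xs \<and> v \<in> Xs ! x)" for v x
  have conv: "mem v y" if "mem v x" "mem v z" "x \<le> y" "y \<le> z" for v x y z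
  proof -
    have "y < length Xs" using that unfolding mem_def by linarith
    then show ?thesis using conv0[of x y z v] that unfolding mem_def by blast
  qed
  have quad: False if d: "distinct [a,b,c,d]" and m: "mem a x" "mem b x" "mem c x" "mem d x" for a b c d x
  proof -
    have x: "x < length Xs" using m(1) unfolding mem_def by simp
    have S: "{a,b,c,d} \<subseteq> Xs ! x" using m unfolding mem_def by simp
    have "finite (Xs ! x)" using sub[OF x] finite_V finite_subset by blast
    then have "card {a,b,c,d} \<le> card (Xs ! x)" using S card_mono by blast
    moreover have "card {a,b,c,d} = 4" using d by simp
    ultimately show False using small[OF x] by linarith
  qed
  have pt: "\<exists>x. \<forall>v\<in>e. mem v x" if "e \<in> Hn_S n" for e
    using edge[OF that] unfolding mem_def by blast
  have ptg: "\<exists>x. \<forall>v\<in>e. mem v x" if "e \<in> gadget_edges 1" for e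
    using pt G[OF n] that by blast
  obtain p where "\<forall>v\<in>{(1::nat,I2),(1,IA),(1,IB)}. mem v p" using ptg[OF ge1(1)] by blast
  then have p: "mem (1,I2) p" "mem (1,IA) p" "mem (1,IB) p" by simp_all
  obtain q where "\<forall>v\<in>{(1::nat,I4),(1,IA),(1,IB)}. mem v q" using ptg[OF ge1(2)] by blast
  then have q: "mem (1,I4) q" "mem (1,IA) q" "mem (1,IB) q" by simp_all
  obtain x14 where "\<forall>v\<in>{(1::nat,I1),(1,I4)}. mem v x14" using ptg[OF ge1(3)] by blast
  then have e14: "mem (1,I1) x14" "mem (1,I4) x14" by simp_all
  obtain x1B where "\<forall>v\<in>{(1::nat,I1),(1,IB)}. mem v x1B" using ptg[OF ge1(4)] by blast
  then have e1B: "mem (1,I1) x1B" "mem (1,IB) x1B" by simp_all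
  obtain x4B where "\<forall>v\<in>{(1::nat,I4),(1,IB)}. mem v x4B" using ptg[OF ge1(5)] by blast
  then have e4B: "mem (1,I4) x4B" "mem (1,IB) x4B" by simp_all
  obtain s where "\<forall>v\<in>{(1::nat,I5),(1,I6)}. mem v s" using ptg[OF ge1(6)] by blast
  then have s: "mem (1,I5) s" "mem (1,I6) s" by simp_all
  obtain u where "\<forall>v\<in>{(1::nat,I4),(1,I5)}. mem v u" using ptg[OF ge1(7)] by blast
  then have u: "mem (1,I5) u" "mem (1,I4) u" by simp_all
  obtain a where "\<forall>v\<in>{(1::nat,I6),(1,IA)}. mem v a" using pt[OF e6A] by blast
  then have a: "mem (1,I6) a" "mem (1,IA) a" by simp_all
  have dist: "distinct [(1::nat,I1),(1,I2),(1,I4),(1,I5),(1,I6),(1,IA),(1,IB)]" by simp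
  show False
    by (rule core[of mem, OF conv quad dist p q e14 e1B e4B a s u])
qed


definition lo :: "nat \<Rightarrow> idx \<Rightarrow> nat" where
  "lo k i = (case i of I6 \<Rightarrow> 6*(k-1)-1 | IA \<Rightarrow> 6*(k-1)-1 | I3 \<Rightarrow> 6*(k-1) | I5 \<Rightarrow> 6*(k-1)
     | I2 \<Rightarrow> 6*(k-1)+1 | I4 \<Rightarrow> 6*(k-1)+2 | IB \<Rightarrow> 6*(k-1)+3 | I1 \<Rightarrow> 6*(k-1)+4)"
definition hi :: "nat \<Rightarrow> idx \<Rightarrow> nat" where
  "hi k i = (case i of I6 \<Rightarrow> 6*(k-1) | IA \<Rightarrow> 6*(k-1)+3 | I3 \<Rightarrow> 6*(k-1)+1 | I5 \<Rightarrow> 6*(k-1)+2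
     | I2 \<Rightarrow> 6*(k-1)+4 | I4 \<Rightarrow> 6*(k-1)+4 | IB \<Rightarrow> 6*(k-1)+5 | I1 \<Rightarrow> 6*(k-1)+5)"
definition bin :: "nat \<Rightarrow> (nat \<times> idx) set" where
  "bin r = {(k,i). 1 \<le> k \<and> lo k i \<le> r \<and> r \<le> hi k i}"

lemma mem_bin: "(k,i) \<in> bin r \<longleftrightarrow> 1 \<le> k \<and> lo k i \<le> r \<and> r \<le> hi k i"
  by (simp add: bin_def)

lemma bin0: "bin (6*q) = {(q+1,I3),(q+1,I5),(q+1,I6),(q+1,IA)}"
  unfolding set_eq_iff split_paired_All
  by (intro allI, case_tac b) (auto simp: mem_bin lo_def hi_def; presburger)+
lemma bin1: "bin (6*q+1) = {(q+1,I2),(q+1,I3),(q+1,I5),(q+1,IA)}"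
  unfolding set_eq_iff split_paired_All
  by (intro allI, case_tac b) (auto simp: mem_bin lo_def hi_def; presburger)+
lemma bin2: "bin (6*q+2) = {(q+1,I2),(q+1,I4),(q+1,I5),(q+1,IA)}"
  unfolding set_eq_iff split_paired_All
  by (intro allI, case_tac b) (auto simp: mem_bin lo_def hi_def; presburger)+
lemma bin3: "bin (6*q+3) = {(q+1,I2),(q+1,I4),(q+1,IA),(q+1,IB)}"
  unfolding set_eq_iff split_paired_All
  by (intro allI, case_tac b) (auto simp: mem_bin lo_def hi_def; presburger)+
lemma bin4: "bin (6*q+4) = {(q+1,I1),(q+1,I2),(q+1,I4),(q+1,IB)}"
  unfolding set_eq_iff split_paired_All
  by (intro allI, case_tac b) (auto simp: mem_bin lo_def hi_def; presburger)+
lemma bin5: "bin (6*q+5) = {(q+1,I1),(q+1,IB),(q+2,I6),(q+2,IA)}"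
  unfolding set_eq_iff split_paired_All
  by (intro allI, case_tac b) (auto simp: mem_bin lo_def hi_def; presburger)+

lemma card_bin: "card (bin r) = 4"
proof -
  obtain q j where r: "r = 6*q+j" "j < 6" by (metis mod_less_divisor div_mult_mod_eq mult.commute zero_less_numeral)
  then have "j = 0 \<or> j = 1 \<or> j = 2 \<or> j = 3 \<or> j = 4 \<or> j = 5" by linarith
  then show ?thesis using r by (auto simp: bin0 bin1 bin2 bin3 bin4 bin5 bin1[simplified] bin2[simplified])
qed


lemma lo_ge: "6*(k-1)-1 \<le> lo k i" by (cases i) (auto simp: lo_def)
lemma lo_le: "lo k i \<le> 6*(k-1)+4" by (cases i) (auto simp: lo_def)
lemma lo_hi: "lo k i \<le> hi k i" by (cases i) (auto simp: lo_def hi_def)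

lemma gadget_cover:
  assumes "e \<in> gadget_edges (Suc q)"
  shows "e \<subseteq> bin (6*q) \<or> e \<subseteq> bin (6*q+1) \<or> e \<subseteq> bin (6*q+2) \<or>
         e \<subseteq> bin (6*q+3) \<or> e \<subseteq> bin (6*q+4)"
  using assms unfolding bin0 bin1 bin2 bin3 bin4 by (simp add: gadget_edges_def) (elim disjE; simp)

lemma pd_upper:
  assumes n: "n \<ge> 1"
  shows "is_path_decomposition (Hn_V n) (Hn_S n) (map bin [0..<6*n-1])"
  unfolding is_path_decomposition_def
proof (intro conjI allI impI ballI)
  show "map bin [0..<6*n-1] \<noteq> []" using n by simp
next
  fix r assume r: "r < length (map bin [0..<6 * n - 1])"
  show "map bin [0..<6 * n - 1] ! r \<subseteq> Hn_V n"
  proof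
    fix x assume "x \<in> map bin [0..<6 * n - 1] ! r"
    moreover obtain k i where x: "x = (k,i)" by (cases x)
    ultimately have "1 \<le> k" "lo k i \<le> r" using r by (auto simp: mem_bin)
    moreover have "6*(k-1)-1 \<le> lo k i" by (rule lo_ge)
    ultimately show "x \<in> Hn_V n" using r x by (auto simp: Hn_V_def)
  qed
next
  fix v assume "v \<in> Hn_V n"
  then obtain k i where v: "v = (k,i)" "1 \<le> k" "k \<le> n" by (auto simp: Hn_V_def)
  have "lo k i < 6*n-1" using lo_le[of k i] v by linarith
  then show "\<exists>r<length (map bin [0..<6 * n - 1]). v \<in> map bin [0..<6 * n - 1] ! r"
    using v lo_hi[of k i] by (intro exI[of _ "lo k i"]) (auto simp: mem_bin)
next
  fix v r s l assume h: "r \<le> l \<and> l \<le> s \<and> s < length (map bin [0..<6 * n - 1]) \<and>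
    v \<in> map bin [0..<6 * n - 1] ! r \<and> v \<in> map bin [0..<6 * n - 1] ! s"
  obtain k i where "v = (k,i)" by (cases v)
  then show "v \<in> map bin [0..<6 * n - 1] ! l" using h by (auto simp: mem_bin)
next
  fix e assume "e \<in> Hn_S n"
  then consider (a) v where "e = {v}" "v \<in> Hn_V n"
    | (b) k where "k \<in> {1..n}" "e \<in> gadget_edges k"
    | (c) k where "e = {(k,I6),(k-1,I1)}" "2 \<le> k" "k \<le> n"
    | (d) k where "e = {(k,IB),(k+1,IA)}" "1 \<le> k" "k \<le> n - 1"
    | (e) "e = {(1,I6),(1,IA)}"
    unfolding Hn_S_def by blast
  then show "\<exists>r<length (map bin [0..<6 * n - 1]). e \<subseteq> map bin [0..<6 * n - 1] ! r"
  proof cases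
    case a
    then obtain k i where v: "e = {(k,i)}" "1 \<le> k" "k \<le> n" by (auto simp: Hn_V_def)
    have "lo k i < 6*n-1" using lo_le[of k i] v by linarith
    then show ?thesis using v lo_hi[of k i] by (intro exI[of _ "lo k i"]) (auto simp: mem_bin)
  next
    case b
    then obtain q where k: "k = Suc q" "q < n" by (cases k) auto
    have lt: "6*q+j < 6*n-1" if "j \<le> 4" for j using k that by linarith
    have g: "e \<subseteq> bin (6*q) \<or> e \<subseteq> bin (6*q+1) \<or> e \<subseteq> bin (6*q+2) \<or>
         e \<subseteq> bin (6*q+3) \<or> e \<subseteq> bin (6*q+4)" using gadget_cover[of e q] b(2) k(1) by simp
    from g show ?thesis
    proof (elim disjE)
      assume "e \<subseteq> bin (6*q)" then show ?thesis using lt[of 0]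
        by (intro exI[of _ "6*q"]) auto
    next
      assume "e \<subseteq> bin (6*q+1)" then show ?thesis using lt[of 1]
        by (intro exI[of _ "6*q+1"]) auto
    next
      assume "e \<subseteq> bin (6*q+2)" then show ?thesis using lt[of 2]
        by (intro exI[of _ "6*q+2"]) auto
    next
      assume "e \<subseteq> bin (6*q+3)" then show ?thesis using lt[of 3]
        by (intro exI[of _ "6*q+3"]) auto
    next
      assume "e \<subseteq> bin (6*q+4)" then show ?thesis using lt[of 4]
        by (intro exI[of _ "6*q+4"]) auto
    qed
  next
    case c
    then obtain q where q: "k = Suc (Suc q)" "q + 2 \<le> n" by (cases k; cases "k - 1") auto
    have "bin (6*q+5) = {(q+1,I1),(q+1,IB),(q+2,I6),(q+2,IA)}" by (rule bin5)
    then have "e \<subseteq> bin (6*q+5)" using c q by auto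
    moreover have "6*q+5 < 6*n-1" using q by linarith
    ultimately show ?thesis by (intro exI[of _ "6*q+5"]) auto
  next
    case d
    then obtain q where q: "k = Suc q" "q + 2 \<le> n" by (cases k) auto
    have "bin (6*q+5) = {(q+1,I1),(q+1,IB),(q+2,I6),(q+2,IA)}" by (rule bin5)
    then have "e \<subseteq> bin (6*q+5)" using d q by auto
    moreover have "6*q+5 < 6*n-1" using q by linarith
    ultimately show ?thesis by (intro exI[of _ "6*q+5"]) auto
  next
    case e
    have "bin (6*0) = {(0+1,I3),(0+1,I5),(0+1,I6),(0+1,IA)}" by (rule bin0)
    then have "e \<subseteq> bin 0" using e by auto
    then show ?thesis using n by (intro exI[of _ 0]) auto
  qed
qed

lemma width_upper:
  assumes n: "n \<ge> 1"
  shows "pd_width (map bin [0..<6*n-1]) = 3"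
proof -
  have "bin 0 \<in> set (map bin [0..<6*n-1])" using n by auto
  then have "card ` set (map bin [0..<6*n-1]) = {4}" using card_bin by force
  then show ?thesis by (simp add: pd_width_def)
qed


theorem proposition3p1:
  fixes n :: nat
  assumes "n \<ge> 1"
  shows "pathwidth (Hn_V n) (Hn_S n) = 3"
  unfolding pathwidth_def
proof (rule Least_equality)
  show "\<exists>Xs. is_path_decomposition (Hn_V n) (Hn_S n) Xs \<and> pd_width Xs = 3"
    using pd_upper[OF assms] width_upper[OF assms] by blast
next
  fix w assume "\<exists>Xs. is_path_decomposition (Hn_V n) (Hn_S n) Xs \<and> pd_width Xs = w"
  then show "3 \<le> w" using lower[OF assms] by blast
qed

end
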